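(* Let $\mathcal{A}$ be a finite abelian group with $|\mathcal{A}|\ge 3$. Let $M_{10}(p_1,p_2)$ be the graph consisting of the $4$-cycle $v_1v_2v_3v_4v_1$ and the triangle $v_1v_5v_6$ (sharing the vertex $v_1$), together with $p_1\ge0$ pendant vertices adjacent to $v_1$ and $p_2\ge 0$ pendant vertices adjacent to $v_2$. Then $M_{10}(p_1,p_2)$ is $\mathcal{A}$-vertex magic if and only if $p_1=p_2=0$ and $|\mathcal{A}|$ is even.
   Context: A map $\ell:V(G)\to\mathcal{A}\setminus\{0\}$ is an $\mathcal{A}$-vertex magic labeling if there is $\mu\in\mathcal{A}$ with $\sum_{u\in N(v)}\ell(u)=\mu$ for every vertex $v$; $G$ is $\mathcal{A}$-vertex magic if such a labeling exists. A pendant vertex has degree $1$. *)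

theory Defs
  imports Main
begin

text \<open>A simple graph is given by a vertex set and a symmetric irreflexive
adjacency relation; the open neighbourhood of v is the set of adjacent vertices.\<close>

definition nbhd :: "'v set \<Rightarrow> ('v \<Rightarrow> 'v \<Rightarrow> bool) \<Rightarrow> 'v \<Rightarrow> 'v set" where
  "nbhd V adj v = {u \<in> V. adj v u}"

definition vertex_magic_labeling ::
  "'v set \<Rightarrow> ('v \<Rightarrow> 'v \<Rightarrow> bool) \<Rightarrow> ('v \<Rightarrow> 'a::ab_group_add) \<Rightarrow> bool" where
  "vertex_magic_labeling V adj l \<longleftrightarrow>
     (\<forall>v\<in>V. l v \<noteq> 0) \<and> (\<exists>\<mu>. \<forall>v\<in>V. (\<Sum>u\<in>nbhd V adj v. l u) = \<mu>)"

text \<open>Vertices of M10(p1,p2): core vertices C 1..C 6, pendants P1 k (k<p1) at C 1,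
  pendants P2 k (k<p2) at C 2.\<close>
datatype m10v = C nat | P1 nat | P2 nat

definition M10_verts :: "nat \<Rightarrow> nat \<Rightarrow> m10v set" where
  "M10_verts p1 p2 = C ` {1..6} \<union> P1 ` {..<p1} \<union> P2 ` {..<p2}"

fun M10_base_edge :: "m10v \<Rightarrow> m10v \<Rightarrow> bool" where
  "M10_base_edge (C i) (C j) \<longleftrightarrow>
     (i, j) \<in> {(1,2),(2,3),(3,4),(4,1),(1,5),(5,6),(6,1)}"
| "M10_base_edge (C i) (P1 k) \<longleftrightarrow> i = 1"
| "M10_base_edge (C i) (P2 k) \<longleftrightarrow> i = 2"
| "M10_base_edge _ _ \<longleftrightarrow> False"

definition M10_adj :: "m10v \<Rightarrow> m10v \<Rightarrow> bool" where
  "M10_adj u v \<longleftrightarrow> M10_base_edge u v \<or> M10_base_edge v u"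

end

theory Submission
  imports Defs
begin

lemma invol_even:
  assumes "finite S" "\<forall>x\<in>S. f x \<in> S \<and> f (f x) = x \<and> f x \<noteq> x"
  shows "even (card S)"
  using assms
proof (induction "card S" arbitrary: S rule: less_induct)
  case less
  show ?case
  proof (cases "S = {}")
    case True then show ?thesis by simp
  next
    case False
    then obtain x where x: "x \<in> S" by blast
    let ?T = "S - {x, f x}"
    have fx: "f x \<in> S" "f x \<noteq> x" using less.prems x by auto
    have cT: "card S = card ?T + 2"
    proof -
      have "card ?T = card S - card {x, f x}"
        using fx x less.prems(1) by (subst card_Diff_subset) auto
      moreover have "card {x, f x} = 2" using fx by auto
      moreover have "card {x, f x} \<le> card S" using fx x less.prems(1) by (intro card_mono) auto
      ultimately show ?thesis by linarith
    qed
    have "even (card ?T)"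
    proof (rule less.hyps)
      show "card ?T < card S" using cT by simp
      show "finite ?T" using less.prems by simp
      show "\<forall>y\<in>?T. f y \<in> ?T \<and> f (f y) = y \<and> f y \<noteq> y"
      proof
        fix y assume y: "y \<in> ?T"
        have P: "\<forall>x\<in>S. f x \<in> S \<and> f (f x) = x \<and> f x \<noteq> x" by (rule less.prems(2))
        have yS: "y \<in> S" "y \<noteq> x" "y \<noteq> f x" using y by auto
        have a: "f y \<in> S" "f (f y) = y" "f y \<noteq> y" using P yS(1) by auto
        have "f y \<noteq> x" using yS(3) a(2) by auto
        moreover have "f y \<noteq> f x" using yS(2) a(2) P x by metis
        ultimately show "f y \<in> ?T \<and> f (f y) = y \<and> f y \<noteq> y" using a by auto
      qed
    qed
    then show ?thesis using cT by simp
  qed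
qed

lemma even_iff_two_torsion:
  "even (card (UNIV :: 'a::{ab_group_add, finite} set)) \<longleftrightarrow> (\<exists>g::'a. g \<noteq> 0 \<and> g + g = 0)"
proof
  assume e: "even (card (UNIV :: 'a set))"
  show "\<exists>g::'a. g \<noteq> 0 \<and> g + g = 0"
  proof (rule ccontr)
    assume n: "\<not> (\<exists>g::'a. g \<noteq> 0 \<and> g + g = 0)"
    have "even (card (UNIV - {0::'a}))"
    proof (rule invol_even[where f = uminus])
      show "finite (UNIV - {0::'a})" by simp
      show "\<forall>x\<in>UNIV - {0::'a}. - x \<in> UNIV - {0} \<and> - (- x) = x \<and> - x \<noteq> x"
      proof
        fix x :: 'a assume "x \<in> UNIV - {0}"
        then have x0: "x \<noteq> 0" by simp
        have "- x \<noteq> x"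
        proof
          assume "- x = x"
          then have "x + x = 0" by (metis add.right_inverse)
          then show False using n x0 by blast
        qed
        then show "- x \<in> UNIV - {0} \<and> - (- x) = x \<and> - x \<noteq> x" using x0 by simp
      qed
    qed
    moreover have "card (UNIV - {0::'a}) = card (UNIV :: 'a set) - 1"
      by (simp add: card_Diff_singleton)
    moreover have "card (UNIV :: 'a set) \<ge> 1"
      by (simp add: Suc_leI finite_UNIV_card_ge_0)
    ultimately show False using e by presburger
  qed
next
  assume "\<exists>g::'a. g \<noteq> 0 \<and> g + g = 0"
  then obtain g :: 'a where g: "g \<noteq> 0" "g + g = 0" by blast
  show "even (card (UNIV :: 'a set))"
  proof (rule invol_even[where f = "\<lambda>x. x + g"])
    show "finite (UNIV :: 'a set)" by simp
    show "\<forall>x\<in>UNIV. x + g \<in> UNIV \<and> x + g + g = x \<and> x + g \<noteq> x"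
      using g by (simp add: add.assoc)
  qed
qed

lemma nb_C3: "nbhd (M10_verts p1 p2) M10_adj (C 3) = {C 2, C 4}"
  unfolding nbhd_def M10_verts_def M10_adj_def
  apply (rule set_eqI) apply (case_tac x) apply auto
  done
lemma nb_C4: "nbhd (M10_verts p1 p2) M10_adj (C 4) = {C 1, C 3}"
  unfolding nbhd_def M10_verts_def M10_adj_def
  apply (rule set_eqI) apply (case_tac x) apply auto
  done
lemma nb_C5: "nbhd (M10_verts p1 p2) M10_adj (C 5) = {C 1, C 6}"
  unfolding nbhd_def M10_verts_def M10_adj_def
  apply (rule set_eqI) apply (case_tac x) apply auto
  done
lemma nb_C6: "nbhd (M10_verts p1 p2) M10_adj (C 6) = {C 1, C 5}"
  unfolding nbhd_def M10_verts_def M10_adj_def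
  apply (rule set_eqI) apply (case_tac x) apply auto
  done
lemma nb_C1: "nbhd (M10_verts 0 0) M10_adj (C 1) = {C 2, C 4, C 5, C 6}"
  unfolding nbhd_def M10_verts_def M10_adj_def
  apply (rule set_eqI) apply (case_tac x) apply auto
  done
lemma nb_C2: "nbhd (M10_verts 0 0) M10_adj (C 2) = {C 1, C 3}"
  unfolding nbhd_def M10_verts_def M10_adj_def
  apply (rule set_eqI) apply (case_tac x) apply auto
  done
lemma nb_P1: "k < p1 \<Longrightarrow> nbhd (M10_verts p1 p2) M10_adj (P1 k) = {C 1}"
  unfolding nbhd_def M10_verts_def M10_adj_def
  apply (rule set_eqI) apply (case_tac x) apply auto
  done
lemma nb_P2: "k < p2 \<Longrightarrow> nbhd (M10_verts p1 p2) M10_adj (P2 k) = {C 2}"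
  unfolding nbhd_def M10_verts_def M10_adj_def
  apply (rule set_eqI) apply (case_tac x) apply auto
  done

lemma inV: "C i \<in> M10_verts p1 p2 \<longleftrightarrow> i \<in> {1..6}" "k < p1 \<Longrightarrow> P1 k \<in> M10_verts p1 p2"
  "k < p2 \<Longrightarrow> P2 k \<in> M10_verts p1 p2"
  by (auto simp: M10_verts_def)

theorem proposition4p9:
  fixes p1 p2 :: nat
  assumes "card (UNIV :: 'a::{ab_group_add, finite} set) \<ge> 3"
  shows "(\<exists>l :: m10v \<Rightarrow> 'a. vertex_magic_labeling (M10_verts p1 p2) M10_adj l)
         \<longleftrightarrow> (p1 = 0 \<and> p2 = 0 \<and> even (card (UNIV :: 'a set)))"
proof
  assume "\<exists>l :: m10v \<Rightarrow> 'a. vertex_magic_labeling (M10_verts p1 p2) M10_adj l"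
  then obtain l :: "m10v \<Rightarrow> 'a" and \<mu> where
    nz: "\<forall>v\<in>M10_verts p1 p2. l v \<noteq> 0" and
    mg: "\<forall>v\<in>M10_verts p1 p2. (\<Sum>u\<in>nbhd (M10_verts p1 p2) M10_adj v. l u) = \<mu>"
    unfolding vertex_magic_labeling_def by blast
  have nz5: "l (C 5) \<noteq> 0" and nz4: "l (C 4) \<noteq> 0" using nz by (auto simp: inV)
  have e3: "l (C 2) + l (C 4) = \<mu>" using mg[rule_format, of "C 3"] by (simp add: inV nb_C3)
  have e5: "l (C 1) + l (C 6) = \<mu>" using mg[rule_format, of "C 5"] by (simp add: inV nb_C5)
  have e6: "l (C 1) + l (C 5) = \<mu>" using mg[rule_format, of "C 6"] by (simp add: inV nb_C6)
  have p1: "p1 = 0"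
  proof (rule ccontr)
    assume "p1 \<noteq> 0"
    then have "l (C 1) = \<mu>" using mg[rule_format, of "P1 0"] by (simp add: inV nb_P1)
    then show False using e6 nz5 by simp
  qed
  have p2: "p2 = 0"
  proof (rule ccontr)
    assume "p2 \<noteq> 0"
    then have "l (C 2) = \<mu>" using mg[rule_format, of "P2 0"] by (simp add: inV nb_P2)
    then show False using e3 nz4 by simp
  qed
  have e1: "l (C 2) + (l (C 4) + (l (C 5) + l (C 6))) = \<mu>"
    using mg[unfolded p1 p2, rule_format, of "C 1", unfolded nb_C1] by (simp add: inV add.assoc)
  have "l (C 5) + l (C 5) = 0"
  proof -
    have "l (C 5) = l (C 6)" using e5 e6 by (metis add_left_cancel)
    moreover have "l (C 5) + l (C 6) = 0" using e1 e3
      by (metis add.assoc add.right_neutral add_left_cancel)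
    ultimately show ?thesis by simp
  qed
  then show "p1 = 0 \<and> p2 = 0 \<and> even (card (UNIV :: 'a set))"
    using p1 p2 nz5 even_iff_two_torsion by blast
next
  assume h: "p1 = 0 \<and> p2 = 0 \<and> even (card (UNIV :: 'a set))"
  then obtain g :: 'a where g: "g \<noteq> 0" "g + g = 0" using even_iff_two_torsion by blast
  have "vertex_magic_labeling (M10_verts 0 0) M10_adj (\<lambda>_. g)"
    unfolding vertex_magic_labeling_def
  proof (intro conjI exI[of _ 0] ballI)
    fix v assume v: "v \<in> M10_verts 0 0"
    show "g \<noteq> 0" by (rule g(1))
    from v obtain i where i: "v = C i" "i \<in> {1..6}" by (auto simp: M10_verts_def)
    have s4: "(\<Sum>u\<in>{C 2, C 4, C 5, C 6}. g) = g + (g + (g + g))" by simp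
    have s2: "\<And>a b. a \<noteq> b \<Longrightarrow> (\<Sum>u\<in>{a, b}. g) = g + g" by simp
    have 4: "g + (g + (g + g)) = 0" using g(2) by (simp add: add.assoc[symmetric])
    from i have "i = 1 \<or> i = 2 \<or> i = 3 \<or> i = 4 \<or> i = 5 \<or> i = 6" by auto
    then show "(\<Sum>u\<in>nbhd (M10_verts 0 0) M10_adj v. g) = 0"
    proof (elim disjE)
      assume "i = 1" then show ?thesis using i(1) nb_C1 s4 4 by simp
    next
      assume "i = 2" then show ?thesis using i(1) nb_C2 s2[of "C 1" "C 3"] g(2) by simp
    next
      assume "i = 3" then show ?thesis using i(1) nb_C3 s2[of "C 2" "C 4"] g(2) by simp
    next
      assume "i = 4" then show ?thesis using i(1) nb_C4 s2[of "C 1" "C 3"] g(2) by simp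
    next
      assume "i = 5" then show ?thesis using i(1) nb_C5 s2[of "C 1" "C 6"] g(2) by simp
    next
      assume "i = 6" then show ?thesis using i(1) nb_C6 s2[of "C 1" "C 5"] g(2) by simp
    qed
  qed
  then show "\<exists>l :: m10v \<Rightarrow> 'a. vertex_magic_labeling (M10_verts p1 p2) M10_adj l"
    using h by blast
qed

end
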